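(* Let $\pi : (\mathbb Z_2^2)^* \to \mathbb Z_3$ be a bijection and let $g,h \in (\mathbb Z_2^2)^*$ with $g\neq h$. Suppose $q\equiv 1\pmod 6$ is a prime power and $\rho$ is a primitive element of $\mathbb F_q$. Then $c^3_q\big(\pi(h-g)-\pi(g),\ \pi(h)-\pi(g)\big) = c^3_q(1,2)$.
   Context: $(\mathbb Z_2^2)^*=\mathbb Z_2^2\setminus\{0\}$. Write $q=6r+1$; for $i\in\mathbb Z_3$, $C^3_q(i)=\{\rho^{3j+i}: 0\le j\le 2r-1\}$, and for $a,b\in\mathbb Z_3$, $c^3_q(a,b)=|(C^3_q(a)+1)\cap C^3_q(b)|$. *)

theory Defs
  imports Main "HOL-Library.Numeral_Type" "HOL-Library.Product_Plus"
begin

text \<open>Z_2^2 is modelled as the type 2 \<times> 2 (componentwise arithmetic mod 2),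
  Z_3 as the type 3 (arithmetic mod 3); F_q as a finite field type 'a with q = CARD('a).\<close>

definition primitive_element :: "'a::{finite,field} \<Rightarrow> bool" where
  "primitive_element \<rho> \<longleftrightarrow> \<rho> \<noteq> 0 \<and> (\<forall>x. x \<noteq> 0 \<longrightarrow> (\<exists>k::nat. x = \<rho> ^ k))"

definition cyc_class :: "'a::{finite,field} \<Rightarrow> 3 \<Rightarrow> 'a set" where
  "cyc_class \<rho> i = (let r = (CARD('a) - 1) div 6 in
     {\<rho> ^ (3 * j + nat (Rep_bit1 i)) | j. j \<le> 2 * r - 1})"

definition cyc_num :: "'a::{finite,field} \<Rightarrow> 3 \<Rightarrow> 3 \<Rightarrow> nat" where
  "cyc_num \<rho> a b = card (((\<lambda>x. x + 1) ` cyc_class \<rho> a) \<inter> cyc_class \<rho> b)"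

end

theory Submission imports Defs begin

lemma pow_card:
  assumes "(\<rho>::'a::{finite,field}) \<noteq> 0"
  shows "\<rho> ^ (CARD('a) - 1) = 1"
proof -
  define N :: "'a set" where "N = UNIV - {0}"
  have fin: "finite N" by simp
  have bij: "bij_betw (\<lambda>y. \<rho> * y) N N"
    unfolding N_def bij_betw_def inj_on_def
  proof (intro conjI ballI impI)
    show "(\<lambda>y. \<rho> * y) ` (UNIV - {0}) = UNIV - {0}"
    proof
      show "(\<lambda>y. \<rho> * y) ` (UNIV - {0}) \<subseteq> UNIV - {0}" using assms by auto
      show "UNIV - {0} \<subseteq> (\<lambda>y. \<rho> * y) ` (UNIV - {0})"
      proof
        fix z assume z: "z \<in> (UNIV::'a set) - {0}"
        then have "z = \<rho> * (z / \<rho>)" using assms by simp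
        moreover have "z / \<rho> \<in> UNIV - {0}" using z assms by simp
        ultimately show "z \<in> (\<lambda>y. \<rho> * y) ` (UNIV - {0})" by blast
      qed
    qed
  qed (use assms in simp)
  have "prod (\<lambda>y. y) N = prod (\<lambda>y. \<rho> * y) N"
    using prod.reindex_bij_betw[OF bij, of "\<lambda>y. y"] by simp
  also have "\<dots> = \<rho> ^ card N * prod (\<lambda>y. y) N"
    by (simp add: prod.distrib)
  finally have eq: "prod (\<lambda>y. y) N = \<rho> ^ card N * prod (\<lambda>y. y) N" .
  have nz: "prod (\<lambda>y. y) N \<noteq> 0" using fin by (simp add: N_def)
  have "\<rho> ^ card N = 1" using eq nz by simp
  moreover have "card N = CARD('a) - 1" unfolding N_def
    by (simp add: card_Diff_singleton)
  ultimately show ?thesis by simp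
qed

lemma card_facts:
  assumes q: "CARD('a::{finite,field}) mod 6 = 1"
  shows "CARD('a) - 1 = 6 * ((CARD('a) - 1) div 6) \<and> (CARD('a) - 1) div 6 \<ge> 1"
proof -
  have "card {0,1::'a} \<le> CARD('a)" by (rule card_mono) auto
  then have c2: "CARD('a) \<ge> 2" by simp
  define c where "c = CARD('a)"
  have "c mod 6 = 1" "c \<ge> 2" using q c2 unfolding c_def by auto
  then have "c - 1 = 6 * ((c - 1) div 6) \<and> (c - 1) div 6 \<ge> 1" by presburger
  then show ?thesis unfolding c_def .
qed

lemma class_eq:
  fixes \<rho> :: "'a::{finite,field}"
  assumes q: "CARD('a) mod 6 = 1" and p: "primitive_element \<rho>" and n: "n < 3"
  shows "{\<rho> ^ (3 * j + n) | j. j \<le> 2 * ((CARD('a) - 1) div 6) - 1} = {\<rho> ^ k | k. k mod 3 = n}"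
proof -
  define r where "r = (CARD('a) - 1) div 6"
  have q1: "CARD('a) - 1 = 6 * r" and r1: "r \<ge> 1" using card_facts[OF q] unfolding r_def by auto
  have pc: "\<rho> ^ (6 * r) = 1" using pow_card[of \<rho>] p q1 unfolding primitive_element_def by simp
  show ?thesis unfolding r_def[symmetric]
  proof
    show "{\<rho> ^ (3 * j + n) | j. j \<le> 2 * r - 1} \<subseteq> {\<rho> ^ k | k. k mod 3 = n}"
    proof
      fix x assume "x \<in> {\<rho> ^ (3 * j + n) | j. j \<le> 2 * r - 1}"
      then obtain j where x: "x = \<rho> ^ (3 * j + n)" by blast
      have "(3 * j + n) mod 3 = n" using n by simp
      then show "x \<in> {\<rho> ^ k | k. k mod 3 = n}" using x by blast
    qed
    show "{\<rho> ^ k | k. k mod 3 = n} \<subseteq> {\<rho> ^ (3 * j + n) | j. j \<le> 2 * r - 1}"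
    proof
      fix x assume "x \<in> {\<rho> ^ k | k. k mod 3 = n}"
      then obtain k where x: "x = \<rho> ^ k" and k: "k mod 3 = n" by auto
      define k' where "k' = k mod (6 * r)"
      have eq: "k = 6 * r * (k div (6 * r)) + k'" unfolding k'_def by simp
      have "\<rho> ^ k = \<rho> ^ (6 * r * (k div (6 * r)) + k')" using eq by (rule arg_cong)
      also have "\<dots> = (\<rho> ^ (6 * r)) ^ (k div (6 * r)) * \<rho> ^ k'" by (simp only: power_add power_mult)
      also have "\<dots> = \<rho> ^ k'" using pc by simp
      finally have x': "x = \<rho> ^ k'" using x by simp
      have k'3: "k' mod 3 = n"
      proof -
        have "3 dvd 6 * r" by simp
        then show ?thesis using k unfolding k'_def by (simp add: mod_mod_cancel)
      qed
      have "k' < 6 * r" unfolding k'_def using r1 by simp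
      then have "k' div 3 < 2 * r" by (simp add: div_less_iff_less_mult)
      then have b: "k' div 3 \<le> 2 * r - 1" by simp
      have e: "3 * (k' div 3) + n = k'" using k'3 div_mult_mod_eq[of k' 3] by linarith
      have "x = \<rho> ^ (3 * (k' div 3) + n)" using x' e by simp
      then have "x = \<rho> ^ (3 * (k' div 3) + n) \<and> k' div 3 \<le> 2 * r - 1" using b by simp
      then show "x \<in> {\<rho> ^ (3 * j + n) | j. j \<le> 2 * r - 1}" by blast
    qed
  qed
qed


lemma rep2: "Rep_bit1 (2::3) = 2" using bit1.Rep_numeral[where 'a=num1, of "Num.Bit0 Num.One"] by simp
lemma rep1: "Rep_bit1 (1::3) = 1" using bit1.Rep_1[where 'a=num1] by simp

lemma cyc12:
  fixes \<rho> :: "'a::{finite,field}"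
  assumes q: "CARD('a) mod 6 = 1" and p: "primitive_element \<rho>"
  shows "cyc_class \<rho> 1 = {\<rho> ^ k | k. k mod 3 = 1}" "cyc_class \<rho> 2 = {\<rho> ^ k | k. k mod 3 = 2}"
  using class_eq[OF q p, of 1] class_eq[OF q p, of 2]
  by (simp_all add: cyc_class_def Let_def rep1 rep2)

lemma flip:
  fixes \<rho> :: "'a::{finite,field}"
  assumes q: "CARD('a) mod 6 = 1" and p: "primitive_element \<rho>"
    and x: "x = \<rho> ^ k" and l: "x + 1 = \<rho> ^ l"
  shows "\<exists>m. inverse x = \<rho> ^ m \<and> m mod 3 = (2 * k) mod 3"
        "\<exists>m. inverse x + 1 = \<rho> ^ m \<and> m mod 3 = (l + 2 * k) mod 3"
proof -
  define r where "r = (CARD('a) - 1) div 6"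
  have q1: "CARD('a) - 1 = 6 * r" and r1: "r \<ge> 1" using card_facts[OF q] unfolding r_def by auto
  have rnz: "\<rho> \<noteq> 0" using p unfolding primitive_element_def by simp
  have pc: "\<rho> ^ (6 * r) = 1" using pow_card[OF rnz] q1 by simp
  define m where "m = k * (6 * r - 1)"
  have "\<rho> ^ k * \<rho> ^ m = \<rho> ^ (k * (6 * r))"
  proof -
    have "k + m = k * (6 * r)" unfolding m_def using r1
      by (simp add: diff_mult_distrib2 algebra_simps)
    then show ?thesis by (simp add: power_add[symmetric])
  qed
  also have "\<dots> = (\<rho> ^ (6 * r)) ^ k" by (simp only: mult.commute[of k] power_mult)
  also have "\<dots> = 1" using pc by simp
  finally have inv: "inverse x = \<rho> ^ m" using x by (metis inverse_unique)
  have "6 * r - 1 = 3 * (2 * r - 1) + 2" using r1 by simp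
  then have me: "m = 3 * (k * (2 * r - 1)) + 2 * k" unfolding m_def by (simp add: algebra_simps)
  have mm: "m mod 3 = (2 * k) mod 3" unfolding me by simp
  show "\<exists>m. inverse x = \<rho> ^ m \<and> m mod 3 = (2 * k) mod 3" using inv mm by blast
  have xnz: "x \<noteq> 0" using x rnz by simp
  have "inverse x + 1 = (x + 1) * inverse x" using xnz by (simp add: field_simps)
  also have "\<dots> = \<rho> ^ (l + m)" using l inv by (simp add: power_add)
  finally have "inverse x + 1 = \<rho> ^ (l + m)" .
  moreover have "(l + m) mod 3 = (l + 2 * k) mod 3" using mm by (metis mod_add_right_eq)
  ultimately show "\<exists>m. inverse x + 1 = \<rho> ^ m \<and> m mod 3 = (l + 2 * k) mod 3" by blast
qed

lemma cyc_num_alt: "cyc_num \<rho> a b = card {x. x \<in> cyc_class \<rho> a \<and> x + 1 \<in> cyc_class \<rho> b}"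
proof -
  have "((\<lambda>x. x + 1) ` cyc_class \<rho> a) \<inter> cyc_class \<rho> b
        = (\<lambda>x. x + 1) ` {x. x \<in> cyc_class \<rho> a \<and> x + 1 \<in> cyc_class \<rho> b}" by auto
  moreover have "inj (\<lambda>x::'a. x + 1)" by (simp add: inj_def)
  ultimately show ?thesis unfolding cyc_num_def
    by (simp only:) (rule card_image, rule inj_on_subset, assumption, rule subset_UNIV)
qed

lemma cyc_sym:
  fixes \<rho> :: "'a::{finite,field}"
  assumes q: "CARD('a) mod 6 = 1" and p: "primitive_element \<rho>"
  shows "cyc_num \<rho> 2 1 = cyc_num \<rho> 1 2"
proof -
  define D where "D = (\<lambda>n::nat. {\<rho> ^ k | k. k mod 3 = n})"
  define T where "T = (\<lambda>a b. {x. x \<in> D a \<and> x + 1 \<in> D b})"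
  have e21: "cyc_num \<rho> 2 1 = card (T 2 1)" and e12: "cyc_num \<rho> 1 2 = card (T 1 2)"
    unfolding cyc_num_alt cyc12[OF q p] T_def D_def by simp_all
  have s1: "inverse ` T 2 1 \<subseteq> T 1 2"
  proof
    fix y assume "y \<in> inverse ` T 2 1"
    then obtain x where y: "y = inverse x" and xT: "x \<in> T 2 1" by blast
    from xT have "x \<in> D 2" "x + 1 \<in> D 1" by (simp_all add: T_def)
    then obtain k l where x: "x = \<rho> ^ k" "k mod 3 = 2" and l: "x + 1 = \<rho> ^ l" "l mod 3 = 1"
      by (auto simp add: D_def)
    obtain m where m: "inverse x = \<rho> ^ m" "m mod 3 = (2 * k) mod 3" using flip(1)[OF q p x(1) l(1)] by blast
    obtain m' where m': "inverse x + 1 = \<rho> ^ m'" "m' mod 3 = (l + 2 * k) mod 3" using flip(2)[OF q p x(1) l(1)] by blast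
    have "m mod 3 = 1" using m(2) x(2) by presburger
    then have "y \<in> D 1" unfolding D_def using y m(1) by blast
    moreover have "m' mod 3 = 2" using m'(2) x(2) l(2) by presburger
    then have "y + 1 \<in> D 2" unfolding D_def using y m'(1) by blast
    ultimately show "y \<in> T 1 2" unfolding T_def by simp
  qed
  have s2: "inverse ` T 1 2 \<subseteq> T 2 1"
  proof
    fix y assume "y \<in> inverse ` T 1 2"
    then obtain x where y: "y = inverse x" and xT: "x \<in> T 1 2" by blast
    from xT have "x \<in> D 1" "x + 1 \<in> D 2" by (simp_all add: T_def)
    then obtain k l where x: "x = \<rho> ^ k" "k mod 3 = 1" and l: "x + 1 = \<rho> ^ l" "l mod 3 = 2"
      by (auto simp add: D_def)
    obtain m where m: "inverse x = \<rho> ^ m" "m mod 3 = (2 * k) mod 3" using flip(1)[OF q p x(1) l(1)] by blast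
    obtain m' where m': "inverse x + 1 = \<rho> ^ m'" "m' mod 3 = (l + 2 * k) mod 3" using flip(2)[OF q p x(1) l(1)] by blast
    have "m mod 3 = 2" using m(2) x(2) by presburger
    then have "y \<in> D 2" unfolding D_def using y m(1) by blast
    moreover have "m' mod 3 = 1" using m'(2) x(2) l(2) by presburger
    then have "y + 1 \<in> D 1" unfolding D_def using y m'(1) by blast
    ultimately show "y \<in> T 2 1" unfolding T_def by simp
  qed
  have inj: "inj (inverse :: 'a \<Rightarrow> 'a)" by (rule injI) simp
  have "card (T 2 1) = card (inverse ` T 2 1)"
    by (rule card_image[symmetric], rule inj_on_subset[OF inj subset_UNIV])
  also have "\<dots> \<le> card (T 1 2)" by (rule card_mono[OF finite s1])
  finally have le1: "card (T 2 1) \<le> card (T 1 2)" .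
  have "card (T 1 2) = card (inverse ` T 1 2)"
    by (rule card_image[symmetric], rule inj_on_subset[OF inj subset_UNIV])
  also have "\<dots> \<le> card (T 2 1)" by (rule card_mono[OF finite s2])
  finally have le2: "card (T 1 2) \<le> card (T 2 1)" .
  have "card (T 2 1) = card (T 1 2)" using le1 le2 by (rule antisym)
  then show ?thesis unfolding e21 e12 .
qed

lemma univ3: "(UNIV::3 set) = {0,1,2}"
proof -
  have "(x::3) \<in> {0,1,2}" for x
  proof (cases x)
    case (of_int z)
    then have "z = 0 \<or> z = 1 \<or> z = 2" by auto
    then show ?thesis using of_int by auto
  qed
  then show ?thesis by auto
qed

lemma two_self: "(x::2) + x = 0"
proof (cases x)
  case (of_int z)
  then have "z = 0 \<or> z = 1" by auto
  then show ?thesis using of_int by (auto simp flip: of_int_add)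
qed

lemma pair_self: "(g::2\<times>2) + g = 0"
  by (cases g) (simp add: two_self zero_prod_def)

theorem proposition3p5:
  fixes \<pi> :: "2 \<times> 2 \<Rightarrow> 3" and g h :: "2 \<times> 2" and \<rho> :: "'a::{finite,field}"
  assumes "bij_betw \<pi> (UNIV - {0}) UNIV"
    and "g \<noteq> 0" and "h \<noteq> 0" and "g \<noteq> h"
    and "CARD('a) mod 6 = 1"
    and "primitive_element \<rho>"
  shows "cyc_num \<rho> (\<pi> (h - g) - \<pi> g) (\<pi> h - \<pi> g) = cyc_num \<rho> 1 2"
proof -
  have inj: "inj_on \<pi> (UNIV - {0})" using assms(1) bij_betw_def by blast
  have d0: "h - g \<noteq> 0" using assms by simp
  have d1: "h - g \<noteq> g"
  proof
    assume "h - g = g"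
    then have "h = g + g" by (metis diff_add_cancel)
    then show False using pair_self assms(3) by simp
  qed
  have d2: "h - g \<noteq> h" using assms(2) by simp
  have p1: "\<pi> (h - g) \<noteq> \<pi> g" using inj d0 d1 assms(2) by (auto dest: inj_onD)
  have p2: "\<pi> h \<noteq> \<pi> g" using inj assms(2,3,4) by (auto dest: inj_onD)
  have p3: "\<pi> (h - g) \<noteq> \<pi> h" using inj d0 d2 assms(3) by (auto dest: inj_onD)
  define a where "a = \<pi> (h - g) - \<pi> g"
  define b where "b = \<pi> h - \<pi> g"
  have "a \<noteq> 0" "b \<noteq> 0" "a \<noteq> b" using p1 p2 p3 unfolding a_def b_def by auto
  moreover have "a \<in> {0,1,2}" "b \<in> {0,1,2}" using univ3 by auto
  ultimately have "(a = 1 \<and> b = 2) \<or> (a = 2 \<and> b = 1)" by auto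
  then show ?thesis unfolding a_def[symmetric] b_def[symmetric]
    using cyc_sym[OF assms(5,6)] by auto
qed

end
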